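(* Let $T$ be a tree on $n$ vertices. Then $k(T)\ge \left\lceil \frac{\mathrm{diam}(T)+1}{2}\right\rceil$, and this bound is tight (equality holds, for example, for stars and for paths).
   Context: For a connected graph $G=(V,E)$ and $v\in V$, the status of $v$ is $s(v)=\sum_{u\in V} d(v,u)$, where $d$ is the shortest-path distance. $k(G)$ denotes the number of distinct values among the statuses of the vertices of $G$. $\mathrm{diam}(T)$ is the diameter of $T$. *)

theory Defs
  imports Complex_Main
begin

definition simple_graph :: "'a set \<Rightarrow> 'a set set \<Rightarrow> bool" where
  "simple_graph V E \<longleftrightarrow> finite V \<and> (\<forall>e\<in>E. \<exists>u v. u \<in> V \<and> v \<in> V \<and> u \<noteq> v \<and> e = {u, v})"

definition adj :: "'a set set \<Rightarrow> 'a \<Rightarrow> 'a \<Rightarrow> bool" where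
  "adj E u v \<longleftrightarrow> {u, v} \<in> E"

text \<open>A walk from u to v of length n (number of edges): a vertex list of length n+1.\<close>
definition is_walk :: "'a set \<Rightarrow> 'a set set \<Rightarrow> 'a list \<Rightarrow> bool" where
  "is_walk V E ps \<longleftrightarrow> ps \<noteq> [] \<and> set ps \<subseteq> V \<and>
     (\<forall>i. Suc i < length ps \<longrightarrow> adj E (ps ! i) (ps ! Suc i))"

definition connected_graph :: "'a set \<Rightarrow> 'a set set \<Rightarrow> bool" where
  "connected_graph V E \<longleftrightarrow> V \<noteq> {} \<and>
     (\<forall>u\<in>V. \<forall>v\<in>V. \<exists>ps. is_walk V E ps \<and> hd ps = u \<and> last ps = v)"

definition is_cycle :: "'a set \<Rightarrow> 'a set set \<Rightarrow> 'a list \<Rightarrow> bool" where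
  "is_cycle V E cs \<longleftrightarrow> length cs \<ge> 3 \<and> distinct cs \<and> is_walk V E cs \<and> adj E (last cs) (hd cs)"

definition is_tree :: "'a set \<Rightarrow> 'a set set \<Rightarrow> bool" where
  "is_tree V E \<longleftrightarrow> simple_graph V E \<and> connected_graph V E \<and> (\<nexists>cs. is_cycle V E cs)"

definition dist :: "'a set \<Rightarrow> 'a set set \<Rightarrow> 'a \<Rightarrow> 'a \<Rightarrow> nat" where
  "dist V E u v = (LEAST n. \<exists>ps. is_walk V E ps \<and> hd ps = u \<and> last ps = v \<and> length ps = Suc n)"

definition status :: "'a set \<Rightarrow> 'a set set \<Rightarrow> 'a \<Rightarrow> nat" where
  "status V E v = (\<Sum>u\<in>V. dist V E v u)"

definition k_num :: "'a set \<Rightarrow> 'a set set \<Rightarrow> nat" where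
  "k_num V E = card (status V E ` V)"

definition diam :: "'a set \<Rightarrow> 'a set set \<Rightarrow> nat" where
  "diam V E = Max {dist V E u v | u v. u \<in> V \<and> v \<in> V}"

definition path_edges :: "nat \<Rightarrow> nat set set" where
  "path_edges n = {{i, Suc i} | i. Suc i < n}"

definition star_edges :: "nat \<Rightarrow> nat set set" where
  "star_edges n = {{0, i} | i. 0 < i \<and> i < n}"

end

theory Submission
  imports Defs
begin

lemma adj_sym: "adj E u v = adj E v u"
  by (simp add: adj_def insert_commute)

lemma is_walk_single: "is_walk V E [x] \<longleftrightarrow> x \<in> V"
  by (simp add: is_walk_def)

lemma is_walk_Cons: "ps \<noteq> [] \<Longrightarrow> is_walk V E (x # ps) \<longleftrightarrow> x \<in> V \<and> adj E x (hd ps) \<and> is_walk V E ps"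
proof -
  assume ne: "ps \<noteq> []"
  show ?thesis
  proof
    assume w: "is_walk V E (x # ps)"
    have "adj E x (hd ps)" using w ne unfolding is_walk_def
      by (auto dest!: spec[of _ 0] simp: hd_conv_nth)
    moreover have "is_walk V E ps" using w ne unfolding is_walk_def
    proof (intro conjI allI impI)
      fix i assume a: "Suc i < length ps" and
        h: "x # ps \<noteq> [] \<and> set (x # ps) \<subseteq> V \<and> (\<forall>i. Suc i < length (x # ps) \<longrightarrow> adj E ((x # ps) ! i) ((x # ps) ! Suc i))"
      then show "adj E (ps ! i) (ps ! Suc i)" using h by (auto dest!: spec[of _ "Suc i"])
    qed auto
    ultimately show "x \<in> V \<and> adj E x (hd ps) \<and> is_walk V E ps" using w by (simp add: is_walk_def)
  next
    assume h: "x \<in> V \<and> adj E x (hd ps) \<and> is_walk V E ps"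
    show "is_walk V E (x # ps)" unfolding is_walk_def
    proof (intro conjI allI impI)
      show "x # ps \<noteq> []" by simp
      show "set (x # ps) \<subseteq> V" using h by (simp add: is_walk_def)
      fix i assume "Suc i < length (x # ps)"
      then show "adj E ((x # ps) ! i) ((x # ps) ! Suc i)" using h ne
        by (cases i) (auto simp: is_walk_def hd_conv_nth)
    qed
  qed
qed

lemma is_walk_append: "xs \<noteq> [] \<Longrightarrow> ys \<noteq> [] \<Longrightarrow>
   is_walk V E (xs @ ys) \<longleftrightarrow> is_walk V E xs \<and> is_walk V E ys \<and> adj E (last xs) (hd ys)"
proof (induction xs)
  case Nil then show ?case by simp
next
  case (Cons x xs)
  show ?case
  proof (cases "xs = []")
    case True
    then show ?thesis using Cons.prems by (auto simp add: is_walk_Cons is_walk_single)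
  next
    case False
    then show ?thesis using Cons by (auto simp: is_walk_Cons)
  qed
qed

lemma is_walk_rev: "is_walk V E ps \<Longrightarrow> is_walk V E (rev ps)"
proof (induction ps)
  case Nil then show ?case by (simp add: is_walk_def)
next
  case (Cons x ps)
  show ?case
  proof (cases "ps = []")
    case True then show ?thesis using Cons by simp
  next
    case False
    have w: "x \<in> V" "adj E x (hd ps)" "is_walk V E ps" using Cons.prems False by (simp_all add: is_walk_Cons)
    have "is_walk V E (rev ps @ [x])"
      using False w Cons.IH by (subst is_walk_append) (auto simp: is_walk_single last_rev adj_sym)
    then show ?thesis by simp
  qed
qed

definition reach :: "'a set \<Rightarrow> 'a set set \<Rightarrow> nat \<Rightarrow> 'a \<Rightarrow> 'a \<Rightarrow> bool" where
  "reach V E n u v \<longleftrightarrow> (\<exists>ps. is_walk V E ps \<and> hd ps = u \<and> last ps = v \<and> length ps = Suc n)"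

lemma dist_reach_def: "dist V E u v = (LEAST n. reach V E n u v)"
  by (simp add: dist_def reach_def)

lemma dist_le: "reach V E n u v \<Longrightarrow> dist V E u v \<le> n"
  unfolding dist_reach_def by (rule Least_le)

lemma dist_reach: "reach V E n u v \<Longrightarrow> reach V E (dist V E u v) u v"
  unfolding dist_reach_def by (rule LeastI)

lemma dist_eqI: "reach V E n u v \<Longrightarrow> (\<And>m. reach V E m u v \<Longrightarrow> n \<le> m) \<Longrightarrow> dist V E u v = n"
  unfolding dist_reach_def by (rule Least_equality)

lemma reach_sym: "reach V E n u v \<Longrightarrow> reach V E n v u"
  unfolding reach_def
  by (metis is_walk_rev is_walk_def hd_rev last_rev length_rev)

lemma reach_trans: "reach V E n u v \<Longrightarrow> reach V E m v w \<Longrightarrow> reach V E (n + m) u w"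
proof -
  assume "reach V E n u v" "reach V E m v w"
  then obtain ps qs where p: "is_walk V E ps" "hd ps = u" "last ps = v" "length ps = Suc n"
    and q: "is_walk V E qs" "hd qs = v" "last qs = w" "length qs = Suc m"
    unfolding reach_def by blast
  show ?thesis
  proof (cases "tl qs = []")
    case True
    have "qs = [v]" using q True by (cases qs) auto
    then have "m = 0" "w = v" using q by auto
    then show ?thesis using p unfolding reach_def by auto
  next
    case False
    have qs: "qs = v # tl qs" using q by (cases qs) auto
    have "is_walk V E (ps @ tl qs)"
      using p q False qs is_walk_Cons[of "tl qs" V E v]
      by (subst is_walk_append) (auto simp: is_walk_def)
    moreover have "hd (ps @ tl qs) = u" using p by (auto simp: is_walk_def)
    moreover have "last (ps @ tl qs) = w" using q False qs by (metis last_ConsR last_appendR)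
    moreover have "length (ps @ tl qs) = Suc (n + m)" using p q by simp
    ultimately show ?thesis unfolding reach_def by blast
  qed
qed

lemma reach_adj: "adj E u v \<Longrightarrow> u \<in> V \<Longrightarrow> v \<in> V \<Longrightarrow> reach V E 1 u v"
  unfolding reach_def
  by (rule exI[of _ "[u, v]"]) (simp add: is_walk_Cons is_walk_single)

lemma reach_0: "u \<in> V \<Longrightarrow> reach V E 0 u u"
  unfolding reach_def by (rule exI[of _ "[u]"]) (simp add: is_walk_single)

lemma reach_0_eq: "reach V E 0 u v \<Longrightarrow> u = v"
  unfolding reach_def by (auto simp: length_Suc_conv)

locale tree_ctx =
  fixes V :: "'a set" and E :: "'a set set"
  assumes tree: "is_tree V E"
begin

lemma fin: "finite V" using tree by (simp add: is_tree_def simple_graph_def)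
lemma nonempty: "V \<noteq> {}" using tree by (simp add: is_tree_def connected_graph_def)
lemma nocyc: "\<not> is_cycle V E cs" using tree by (simp add: is_tree_def)

lemma adj_in: "adj E a b \<Longrightarrow> a \<in> V \<and> b \<in> V \<and> a \<noteq> b"
proof -
  assume "adj E a b"
  then obtain u v where "u \<in> V" "v \<in> V" "u \<noteq> v" "{a, b} = {u, v}"
    using tree unfolding is_tree_def simple_graph_def adj_def by blast
  then show ?thesis by (auto simp: doubleton_eq_iff)
qed

lemma conn_reach: "u \<in> V \<Longrightarrow> v \<in> V \<Longrightarrow> \<exists>n. reach V E n u v"
proof -
  assume "u \<in> V" "v \<in> V"
  then obtain ps where "is_walk V E ps" "hd ps = u" "last ps = v"
    using tree unfolding is_tree_def connected_graph_def by blast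
  then have "reach V E (length ps - 1) u v" unfolding reach_def
    by (metis Suc_diff_1 is_walk_def length_greater_0_conv)
  then show ?thesis by blast
qed

lemma dist_wit: "u \<in> V \<Longrightarrow> v \<in> V \<Longrightarrow> reach V E (dist V E u v) u v"
proof -
  assume "u \<in> V" "v \<in> V"
  then obtain n where "reach V E n u v" using conn_reach by blast
  then show ?thesis by (rule dist_reach)
qed

lemma dist_sym: "u \<in> V \<Longrightarrow> v \<in> V \<Longrightarrow> dist V E u v = dist V E v u"
proof -
  assume u: "u \<in> V" and v: "v \<in> V"
  have "dist V E u v \<le> dist V E v u" using dist_le[OF reach_sym[OF dist_wit[OF v u]]] .
  moreover have "dist V E v u \<le> dist V E u v" using dist_le[OF reach_sym[OF dist_wit[OF u v]]] .
  ultimately show ?thesis by simp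
qed

lemma dist_tri: "u \<in> V \<Longrightarrow> v \<in> V \<Longrightarrow> w \<in> V \<Longrightarrow> dist V E u w \<le> dist V E u v + dist V E v w"
proof -
  assume u: "u \<in> V" and v: "v \<in> V" and w: "w \<in> V"
  show ?thesis using dist_le[OF reach_trans[OF dist_wit[OF u v] dist_wit[OF v w]]] .
qed

lemma dist_0_iff: "u \<in> V \<Longrightarrow> v \<in> V \<Longrightarrow> dist V E u v = 0 \<longleftrightarrow> u = v"
proof
  assume "u \<in> V" "v \<in> V" "dist V E u v = 0"
  then show "u = v" using dist_wit reach_0_eq by metis
next
  assume "u \<in> V" "u = v"
  then show "dist V E u v = 0" using reach_0 dist_le by (metis le_zero_eq)
qed

lemma dist_adj_le: "adj E a b \<Longrightarrow> y \<in> V \<Longrightarrow> dist V E a y \<le> dist V E b y + 1"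
proof -
  assume ab: "adj E a b" and y: "y \<in> V"
  have aV: "a \<in> V" and bV: "b \<in> V" using adj_in[OF ab] by auto
  have "dist V E a b \<le> 1" using dist_le[OF reach_adj[OF ab aV bV]] .
  moreover have "dist V E a y \<le> dist V E a b + dist V E b y" using dist_tri[OF aV bV y] .
  ultimately show ?thesis by simp
qed

lemma parent: "v \<in> V \<Longrightarrow> y \<in> V \<Longrightarrow> v \<noteq> y \<Longrightarrow> \<exists>x. adj E v x \<and> dist V E x y + 1 = dist V E v y"
proof -
  assume v: "v \<in> V" and y: "y \<in> V" and ne: "v \<noteq> y"
  obtain ps where ps: "is_walk V E ps" "hd ps = v" "last ps = y" "length ps = Suc (dist V E v y)"
    using dist_wit[OF v y] unfolding reach_def by blast
  have d0: "dist V E v y \<noteq> 0" using dist_0_iff v y ne by blast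
  obtain ps' where ps'1: "ps = v # ps'" using ps by (cases ps) auto
  have ps': "ps = v # ps'" "ps' \<noteq> []" using ps'1 ps d0 by auto
  have w: "adj E v (hd ps')" "is_walk V E ps'" using ps(1) ps' is_walk_Cons[OF ps'(2)] by auto
  have "reach V E (dist V E v y - 1) (hd ps') y" unfolding reach_def
    using w ps ps' d0 by (intro exI[of _ ps']) auto
  then have "dist V E (hd ps') y \<le> dist V E v y - 1" by (rule dist_le)
  moreover have "dist V E v y \<le> dist V E (hd ps') y + 1" using dist_adj_le w y by blast
  ultimately show ?thesis using w d0 by (intro exI[of _ "hd ps'"]) auto
qed

lemma key:
  assumes y: "y \<in> V"
  shows "distinct (u # mid @ [w]) \<Longrightarrow> is_walk V E (u # mid @ [w]) \<Longrightarrow> dist V E u y = k \<Longrightarrow>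
    dist V E w y = k \<Longrightarrow> (\<forall>z\<in>set mid. k < dist V E z y) \<Longrightarrow> False"
proof (induction k arbitrary: u w mid)
  case 0
  have "u \<in> V" "w \<in> V" using "0.prems"(2) by (auto simp: is_walk_def)
  then have "u = y" "w = y" using "0.prems" dist_0_iff y by auto
  then show ?case using "0.prems"(1) by simp
next
  case (Suc k)
  have uV: "u \<in> V" and wV: "w \<in> V" using Suc.prems(2) by (auto simp: is_walk_def)
  have "u \<noteq> y" using Suc.prems(3) y dist_0_iff by force
  then obtain p where p: "adj E u p" "dist V E p y = k" using parent uV y Suc.prems(3) by force
  have "w \<noteq> y" using Suc.prems(4) y dist_0_iff by force
  then obtain q where q: "adj E w q" "dist V E q y = k" using parent wV y Suc.prems(4) by force
  have pV: "p \<in> V" and qV: "q \<in> V" using p q adj_in by auto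
  have pu: "adj E p u" using p(1) by (simp add: adj_def insert_commute)
  have pn: "p \<notin> set (u # mid @ [w])" using p Suc.prems(3-5) by auto
  have qn: "q \<notin> set (u # mid @ [w])" using q Suc.prems(3-5) by auto
  show ?case
  proof (cases "p = q")
    case True
    have "is_walk V E (p # u # mid @ [w])" using Suc.prems(2) pV pu
      by (subst is_walk_Cons) auto
    moreover have "distinct (p # u # mid @ [w])" using pn Suc.prems(1) by simp
    moreover have "adj E (last (p # u # mid @ [w])) (hd (p # u # mid @ [w]))" using q True by simp
    ultimately have "is_cycle V E (p # u # mid @ [w])" unfolding is_cycle_def by simp
    then show False using nocyc by blast
  next
    case False
    have "is_walk V E ((p # u # mid) @ [w, q])"
    proof -
      have "is_walk V E (p # u # mid @ [w])" using Suc.prems(2) pV pu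
        by (subst is_walk_Cons) auto
      moreover have "is_walk V E [w, q]" using wV qV q(1) by (simp add: is_walk_Cons is_walk_single)
      ultimately have "is_walk V E ((p # u # mid @ [w]) @ [q])"
        using qV q(1) by (subst is_walk_append) (auto simp: is_walk_single)
      then show ?thesis by simp
    qed
    then have "is_walk V E (p # (u # mid @ [w]) @ [q])" by simp
    moreover have "distinct (p # (u # mid @ [w]) @ [q])" using pn qn False Suc.prems(1) by auto
    moreover have "\<forall>z\<in>set (u # mid @ [w]). k < dist V E z y" using Suc.prems(3-5) by auto
    ultimately show False using Suc.IH[of p "u # mid @ [w]" q] p(2) q(2) by simp
  qed
qed

lemma bip: "adj E a b \<Longrightarrow> y \<in> V \<Longrightarrow> dist V E a y \<noteq> dist V E b y"
proof
  assume ab: "adj E a b" and y: "y \<in> V" and eq: "dist V E a y = dist V E b y"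
  have "is_walk V E (a # [] @ [b])" using ab adj_in by (simp add: is_walk_Cons is_walk_single)
  moreover have "distinct (a # [] @ [b])" using ab adj_in by simp
  ultimately show False using key[OF y, of a "[]" b] eq by simp
qed

lemma step: "adj E a b \<Longrightarrow> y \<in> V \<Longrightarrow> dist V E b y = dist V E a y + 1 \<or> dist V E a y = dist V E b y + 1"
proof -
  assume ab: "adj E a b" and y: "y \<in> V"
  have "dist V E a y \<le> dist V E b y + 1" using dist_adj_le ab y by blast
  moreover have "dist V E b y \<le> dist V E a y + 1" using dist_adj_le[of b a y] ab y by (simp add: adj_def insert_commute)
  moreover have "dist V E a y \<noteq> dist V E b y" using bip ab y by blast
  ultimately show ?thesis by linarith
qed

lemma uniq: "adj E a b \<Longrightarrow> adj E b c \<Longrightarrow> a \<noteq> c \<Longrightarrow> y \<in> V \<Longrightarrow>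
   dist V E a y + 1 = dist V E b y \<Longrightarrow> dist V E c y + 1 = dist V E b y \<Longrightarrow> False"
proof -
  assume ab: "adj E a b" and bc: "adj E b c" and ac: "a \<noteq> c" and y: "y \<in> V"
    and h1: "dist V E a y + 1 = dist V E b y" and h2: "dist V E c y + 1 = dist V E b y"
  have "is_walk V E (a # [b] @ [c])" using ab bc adj_in by (simp add: is_walk_Cons is_walk_single)
  moreover have "distinct (a # [b] @ [c])" using ab bc adj_in ac by auto
  ultimately show False using key[OF y, of a "[b]" c "dist V E a y"] h1 h2 by simp
qed

end

lemma dec_chain:
  fixes f :: "nat \<Rightarrow> int"
  assumes "\<And>i. i < p \<Longrightarrow> f (Suc i) < f i"
  shows "i < j \<Longrightarrow> j \<le> p \<Longrightarrow> f j < f i"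
proof (induction j)
  case 0 then show ?case by simp
next
  case (Suc j)
  show ?case
  proof (cases "i = j")
    case True then show ?thesis using assms Suc.prems by simp
  next
    case False
    then have "f j < f i" using Suc by simp
    moreover have "f (Suc j) < f j" using assms Suc.prems by simp
    ultimately show ?thesis by simp
  qed
qed

lemma inc_chain:
  fixes f :: "nat \<Rightarrow> int"
  assumes "\<And>i. q \<le> i \<Longrightarrow> i < d \<Longrightarrow> f i < f (Suc i)"
  shows "q \<le> i \<Longrightarrow> i < j \<Longrightarrow> j \<le> d \<Longrightarrow> f i < f j"
proof (induction j)
  case 0 then show ?case by simp
next
  case (Suc j)
  show ?case
  proof (cases "i = j")
    case True then show ?thesis using assms Suc.prems by simp
  next
    case False
    then have "f i < f j" using Suc by simp
    moreover have "f j < f (Suc j)" using assms Suc.prems by simp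
    ultimately show ?thesis by simp
  qed
qed

lemma strict_chain:
  fixes g :: "nat \<Rightarrow> int"
  assumes "\<And>i. Suc i < d \<Longrightarrow> g i < g (Suc i)"
  shows "i < j \<Longrightarrow> j < d \<Longrightarrow> g i < g j"
proof (induction j)
  case 0 then show ?case by simp
next
  case (Suc j)
  show ?case
  proof (cases "i = j")
    case True then show ?thesis using assms Suc.prems by simp
  next
    case False
    then have "g i < g j" using Suc by simp
    moreover have "g j < g (Suc j)" using assms Suc.prems by simp
    ultimately show ?thesis by simp
  qed
qed

lemma convex_count:
  fixes f :: "nat \<Rightarrow> int"
  assumes conv: "\<And>i. Suc i < d \<Longrightarrow> f (Suc i) - f i < f (Suc (Suc i)) - f (Suc i)"
  shows "d + 1 \<le> 2 * card (f ` {0..d})"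
proof -
  define g where "g i = f (Suc i) - f i" for i
  have gm: "g i < g j" if "i < j" "j < d" for i j
    using strict_chain[of d g, OF _ that] conv unfolding g_def by simp
  define p where "p = (LEAST i. i = d \<or> (i < d \<and> g i \<ge> 0))"
  have pP: "p = d \<or> (p < d \<and> g p \<ge> 0)" unfolding p_def by (rule LeastI[of _ d]) simp
  have pd: "p \<le> d" using pP by auto
  have below: "g i < 0" if "i < p" for i
  proof -
    have "\<not> (i = d \<or> (i < d \<and> g i \<ge> 0))" using not_less_Least[OF that[unfolded p_def]] .
    then show ?thesis using that pd by auto
  qed
  have above: "g i > 0" if "p < i" "i < d" for i
  proof -
    have "p < d" "g p \<ge> 0" using pP that by auto
    then show ?thesis using gm[OF that] by simp
  qed
  have inj1: "inj_on f {0..p}"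
  proof (rule inj_onI)
    fix a b assume "a \<in> {0..p}" "b \<in> {0..p}" "f a = f b"
    then show "a = b" using dec_chain[of p f a b] dec_chain[of p f b a] below
      unfolding g_def by (metis atLeastAtMost_iff diff_less_0_iff_less linorder_neqE_nat less_irrefl)
  qed
  have inj2: "inj_on f {Suc p..d}"
  proof (rule inj_onI)
    fix a b assume "a \<in> {Suc p..d}" "b \<in> {Suc p..d}" "f a = f b"
    moreover have "\<And>i. Suc p \<le> i \<Longrightarrow> i < d \<Longrightarrow> f i < f (Suc i)" using above unfolding g_def by force
    ultimately show "a = b" using inc_chain[of "Suc p" d f a b] inc_chain[of "Suc p" d f b a]
      by (metis atLeastAtMost_iff linorder_neqE_nat less_irrefl)
  qed
  have c1: "card (f ` {0..p}) = Suc p" using card_image[OF inj1] by simp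
  have c2: "card (f ` {Suc p..d}) = d - p" using card_image[OF inj2] by simp
  have "card (f ` {0..p}) \<le> card (f ` {0..d})" by (intro card_mono finite_imageI image_mono) (use pd in auto)
  moreover have "card (f ` {Suc p..d}) \<le> card (f ` {0..d})" by (intro card_mono finite_imageI image_mono) auto
  ultimately show ?thesis using c1 c2 pd by linarith
qed

lemma shortcut:
  assumes w: "is_walk V E ps" and len: "Suc (Suc i) < length ps" and eq: "ps ! i = ps ! Suc (Suc i)"
  shows "reach V E (length ps - 3) (hd ps) (last ps)"
proof -
  define qs where "qs = take (Suc i) ps @ drop (Suc (Suc (Suc i))) ps"
  have lq: "length qs = length ps - 2" using len unfolding qs_def by simp
  have nth_q: "qs ! j = (if j < Suc i then ps ! j else ps ! (j + 2))" if "j < length qs" for j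
    using that len unfolding qs_def by (auto simp: nth_append min_def)
  have wq: "is_walk V E qs" unfolding is_walk_def
  proof (intro conjI allI impI)
    show "qs \<noteq> []" using lq len by auto
    show "set qs \<subseteq> V" using w unfolding qs_def is_walk_def
      by (auto dest: in_set_takeD in_set_dropD)
    fix j assume j: "Suc j < length qs"
    have wa: "\<And>k. Suc k < length ps \<Longrightarrow> adj E (ps ! k) (ps ! Suc k)" using w by (simp add: is_walk_def)
    show "adj E (qs ! j) (qs ! Suc j)"
    proof (cases "j < i")
      case True then show ?thesis using nth_q j wa len by simp
    next
      case False
      show ?thesis
      proof (cases "j = i")
        case True then show ?thesis using nth_q j wa[of "Suc (Suc i)"] eq lq by simp
      next
        case False
        then have "i < j" using \<open>\<not> j < i\<close> by simp
        then show ?thesis using nth_q[of j] nth_q[of "Suc j"] j wa[of "j + 2"] lq by simp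
      qed
    qed
  qed
  have hq: "hd qs = hd ps" using len unfolding qs_def by (cases ps) auto
  have lastq: "last qs = last ps"
  proof (cases "length ps = Suc (Suc (Suc i))")
    case True
    then have "qs = take (Suc i) ps" unfolding qs_def by simp
    then have "last qs = ps ! i" using len by (simp add: take_Suc_conv_app_nth)
    also have "\<dots> = last ps" using eq True by (subst last_conv_nth) auto
    finally show ?thesis .
  next
    case False
    then have "drop (Suc (Suc (Suc i))) ps \<noteq> []" using len by simp
    then show ?thesis unfolding qs_def by simp
  qed
  show ?thesis unfolding reach_def
    using wq hq lastq lq len by (intro exI[of _ qs]) auto
qed

context tree_ctx begin

lemma lower_bound: "diam V E + 1 \<le> 2 * k_num V E"
proof -
  define d where "d = diam V E"
  have finS: "finite {dist V E u v | u v. u \<in> V \<and> v \<in> V}"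
  proof -
    have "{dist V E u v | u v. u \<in> V \<and> v \<in> V} = (\<lambda>(u, v). dist V E u v) ` (V \<times> V)" by auto
    then show ?thesis using fin by simp
  qed
  have neS: "{dist V E u v | u v. u \<in> V \<and> v \<in> V} \<noteq> {}" using nonempty by auto
  obtain u v where uv: "u \<in> V" "v \<in> V" "dist V E u v = d"
    using Max_in[OF finS neS] unfolding d_def diam_def by auto
  obtain ps where ps: "is_walk V E ps" "hd ps = u" "last ps = v" "length ps = Suc d"
    using dist_wit[OF uv(1,2)] uv(3) unfolding reach_def by auto
  define x where "x i = ps ! i" for i
  have xV: "x i \<in> V" if "i \<le> d" for i
    using ps(1,4) that unfolding is_walk_def x_def by (metis in_mono less_Suc_eq_le nth_mem)
  have xadj: "adj E (x i) (x (Suc i))" if "i < d" for i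
    using ps(1,4) that unfolding is_walk_def x_def by simp
  have xne: "x i \<noteq> x (Suc (Suc i))" if "Suc (Suc i) \<le> d" for i
  proof
    assume "x i = x (Suc (Suc i))"
    then have "reach V E (length ps - 3) (hd ps) (last ps)"
      using shortcut[OF ps(1), of i] that ps(4) unfolding x_def by simp
    then have "reach V E (d - 2) u v" using ps(2-4) by (simp add: numeral_3_eq_3 numeral_2_eq_2)
    then have "dist V E u v \<le> d - 2" by (rule dist_le)
    then show False using uv(3) that by simp
  qed
  define A where "A i = {y \<in> V. dist V E (x i) y < dist V E (x (Suc i)) y}" for i
  have Afin: "finite (A i)" for i unfolding A_def using fin by simp
  have AV: "A i \<subseteq> V" for i unfolding A_def by auto
  define f where "f i = int (status V E (x i))" for i
  have delta: "f (Suc i) - f i = 2 * int (card (A i)) - int (card V)" if "i < d" for i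
  proof -
    have st: "\<And>y. y \<in> V \<Longrightarrow> int (dist V E (x (Suc i)) y) - int (dist V E (x i) y) = (if y \<in> A i then 1 else -1)"
    proof -
      fix y assume y: "y \<in> V"
      have "dist V E (x i) y \<noteq> dist V E (x (Suc i)) y" using bip[OF xadj[OF that] y] .
      moreover have "dist V E (x (Suc i)) y = dist V E (x i) y + 1 \<or> dist V E (x i) y = dist V E (x (Suc i)) y + 1"
        using step[OF xadj[OF that] y] .
      ultimately show "int (dist V E (x (Suc i)) y) - int (dist V E (x i) y) = (if y \<in> A i then 1 else -1)"
        unfolding A_def using y by auto
    qed
    have "f (Suc i) - f i = (\<Sum>y\<in>V. int (dist V E (x (Suc i)) y) - int (dist V E (x i) y))"
      unfolding f_def status_def by (simp add: sum_subtractf)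
    also have "\<dots> = (\<Sum>y\<in>V. (if y \<in> A i then 1 else -1 :: int))" using st by (rule sum.cong[OF refl])
    also have "\<dots> = (\<Sum>y\<in>V. (2 * (if y \<in> A i then 1 else 0) - 1 :: int))" by (rule sum.cong) auto
    also have "\<dots> = 2 * (\<Sum>y\<in>V. (if y \<in> A i then 1 else 0 :: int)) - int (card V)"
      by (simp add: sum_subtractf sum_distrib_left)
    also have "(\<Sum>y\<in>V. (if y \<in> A i then 1 else 0 :: int)) = int (card (A i))"
    proof -
      have "(\<Sum>y\<in>V. (if y \<in> A i then 1 else 0 :: int)) = (\<Sum>y\<in>V \<inter> A i. 1)"
        using sum.inter_restrict[OF fin, of "\<lambda>_. 1::int" "A i"] by simp
      also have "V \<inter> A i = A i" using AV by auto
      finally show ?thesis by simp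
    qed
    finally show ?thesis .
  qed
  have Amono: "card (A i) < card (A (Suc i))" if "Suc i < d" for i
  proof (rule psubset_card_mono[OF Afin])
    have sub: "A i \<subseteq> A (Suc i)"
    proof
      fix y assume yA: "y \<in> A i"
      then have y: "y \<in> V" unfolding A_def by auto
      have h1: "dist V E (x i) y + 1 = dist V E (x (Suc i)) y"
        using yA step[OF xadj[of i] y] that unfolding A_def by auto
      show "y \<in> A (Suc i)"
      proof (rule ccontr)
        assume "y \<notin> A (Suc i)"
        then have "dist V E (x (Suc (Suc i))) y + 1 = dist V E (x (Suc i)) y"
          using step[OF xadj[of "Suc i"] y] that y unfolding A_def by auto
        then show False using uniq[OF xadj[of i] xadj[of "Suc i"] xne[of i] y h1] that by simp
      qed
    qed
    have xs: "x (Suc i) \<in> A (Suc i)"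
    proof -
      have ne: "x (Suc i) \<noteq> x (Suc (Suc i))" using adj_in xadj[of "Suc i"] that by simp
      have s1: "Suc i \<le> d" "Suc (Suc i) \<le> d" using that by auto
      have a: "dist V E (x (Suc i)) (x (Suc i)) = 0" using dist_0_iff[OF xV[OF s1(1)] xV[OF s1(1)]] by simp
      have b: "dist V E (x (Suc (Suc i))) (x (Suc i)) \<noteq> 0" using dist_0_iff[OF xV[OF s1(2)] xV[OF s1(1)]] ne by simp
      show ?thesis unfolding A_def using xV[OF s1(1)] a b by simp
    qed
    have "x (Suc i) \<notin> A i" unfolding A_def using dist_0_iff[OF xV[of "Suc i"] xV[of "Suc i"]] that by simp
    then show "A i \<subset> A (Suc i)" using sub xs by blast
  qed
  have conv: "f (Suc i) - f i < f (Suc (Suc i)) - f (Suc i)" if "Suc i < d" for i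
    using delta[of i] delta[of "Suc i"] Amono[OF that] that by simp
  have cnt: "d + 1 \<le> 2 * card (f ` {0..d})" using convex_count[of d f] conv by blast
  have "f ` {0..d} \<subseteq> int ` status V E ` V" unfolding f_def using xV by auto
  then have "card (f ` {0..d}) \<le> card (int ` status V E ` V)" using fin by (intro card_mono) auto
  also have "\<dots> = k_num V E" unfolding k_num_def by (simp add: card_image)
  finally show ?thesis using cnt d_def by simp
qed

lemma main_bound: "int (k_num V E) \<ge> \<lceil>(real (diam V E) + 1) / 2\<rceil>"
proof -
  have "diam V E + 1 \<le> 2 * k_num V E" by (rule lower_bound)
  then have "real (diam V E + 1) \<le> real (2 * k_num V E)" by (simp only: of_nat_le_iff)
  then have "(real (diam V E) + 1) / 2 \<le> real (k_num V E)" by simp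
  then show ?thesis by (simp add: ceiling_le_iff)
qed

end

lemma reach_1_adj: "reach V E 1 u v \<Longrightarrow> adj E u v"
  unfolding reach_def is_walk_def
  by (auto simp: length_Suc_conv)

lemma path_adj: "adj (path_edges n) i j \<longleftrightarrow> (Suc i = j \<and> j < n) \<or> (Suc j = i \<and> i < n)"
  unfolding adj_def path_edges_def by (auto simp: doubleton_eq_iff)

lemma path_walk_bound: "is_walk V (path_edges n) ps \<Longrightarrow>
    \<bar>int (hd ps) - int (last ps)\<bar> \<le> int (length ps) - 1"
proof (induction ps)
  case Nil then show ?case by (simp add: is_walk_def)
next
  case (Cons x ps)
  show ?case
  proof (cases "ps = []")
    case True then show ?thesis by simp
  next
    case False
    then have "adj (path_edges n) x (hd ps)" "is_walk V (path_edges n) ps"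
      using Cons.prems is_walk_Cons[OF False] by auto
    then show ?thesis using Cons.IH False by (auto simp: path_adj)
  qed
qed

lemma path_walk_up: "i \<le> j \<Longrightarrow> j < n \<Longrightarrow> is_walk {0..<n} (path_edges n) [i..<Suc j]"
  unfolding is_walk_def by (auto simp: path_adj nth_upt simp del: upt_Suc)

lemma path_dist: "i < n \<Longrightarrow> j < n \<Longrightarrow> dist {0..<n} (path_edges n) i j = nat \<bar>int i - int j\<bar>"
proof -
  assume i: "i < n" and j: "j < n"
  have r: "reach {0..<n} (path_edges n) (nat \<bar>int i - int j\<bar>) i j"
  proof (cases "i \<le> j")
    case True
    have "reach {0..<n} (path_edges n) (j - i) i j"
      unfolding reach_def using path_walk_up[OF True j] True
      by (intro exI[of _ "[i..<Suc j]"]) (auto simp: hd_upt simp del: upt_Suc)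
    moreover have "nat \<bar>int i - int j\<bar> = j - i" using True by arith
    ultimately show ?thesis by (simp only:)
  next
    case False
    have "reach {0..<n} (path_edges n) (i - j) j i"
      unfolding reach_def using path_walk_up[of j i n] False i
      by (intro exI[of _ "[j..<Suc i]"]) (auto simp: hd_upt simp del: upt_Suc)
    moreover have "nat \<bar>int i - int j\<bar> = i - j" using False by arith
    ultimately show ?thesis using reach_sym by metis
  qed
  show ?thesis
  proof (rule dist_eqI[OF r])
    fix m assume "reach {0..<n} (path_edges n) m i j"
    then obtain ps where "is_walk {0..<n} (path_edges n) ps" "hd ps = i" "last ps = j" "length ps = Suc m"
      unfolding reach_def by blast
    then show "nat \<bar>int i - int j\<bar> \<le> m" using path_walk_bound[of "{0..<n}" n ps] by simp
  qed
qed

lemma sum_abs_formula: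
  "2 * (\<Sum>j<n. \<bar>int i - int j\<bar>) =
     (if i < n then int i * (int i + 1) + (int n - 1 - int i) * (int n - int i)
      else 2 * int n * int i - int n * (int n - 1))"
proof (induction n)
  case 0 then show ?case by simp
next
  case (Suc n)
  define S where "S = (\<Sum>j<n. \<bar>int i - int j\<bar>)"
  have ih: "2 * S = (if i < n then int i * (int i + 1) + (int n - 1 - int i) * (int n - int i)
      else 2 * int n * int i - int n * (int n - 1))" using Suc.IH unfolding S_def .
  have "2 * (\<Sum>j<Suc n. \<bar>int i - int j\<bar>) = 2 * S + 2 * \<bar>int i - int n\<bar>"
    unfolding S_def by simp
  also have "\<dots> = (if i < Suc n then int i * (int i + 1) + (int (Suc n) - 1 - int i) * (int (Suc n) - int i)
      else 2 * int (Suc n) * int i - int (Suc n) * (int (Suc n) - 1))"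
  proof (cases "i < n")
    case True then show ?thesis using ih by (simp add: algebra_simps)
  next
    case False
    show ?thesis
    proof (cases "i = n")
      case True then show ?thesis using ih by (simp add: algebra_simps)
    next
      case False
      then have "n < i" using \<open>\<not> i < n\<close> by simp
      then show ?thesis using ih by (simp add: algebra_simps)
    qed
  qed
  finally show ?case .
qed

lemma path_status: "i < n \<Longrightarrow> 2 * int (status {0..<n} (path_edges n) i) =
    int i * (int i + 1) + (int n - 1 - int i) * (int n - int i)"
proof -
  assume i: "i < n"
  have "int (status {0..<n} (path_edges n) i) = (\<Sum>j\<in>{0..<n}. int (nat \<bar>int i - int j\<bar>))"
    unfolding status_def by (simp add: path_dist[OF i])
  also have "\<dots> = (\<Sum>j<n. \<bar>int i - int j\<bar>)" by (simp add: atLeast0LessThan)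
  finally show ?thesis using sum_abs_formula[where n=n and i=i] i by simp
qed

lemma path_status_eq: "i < n \<Longrightarrow> j < n \<Longrightarrow>
   status {0..<n} (path_edges n) i = status {0..<n} (path_edges n) j \<longleftrightarrow> i = j \<or> i + j + 1 = n"
proof -
  assume i: "i < n" and j: "j < n"
  let ?s = "status {0..<n} (path_edges n)"
  have "?s i = ?s j \<longleftrightarrow> 2 * int (?s i) = 2 * int (?s j)" by simp
  also have "\<dots> \<longleftrightarrow> int i * (int i + 1) + (int n - 1 - int i) * (int n - int i) =
      int j * (int j + 1) + (int n - 1 - int j) * (int n - int j)"
    using path_status[OF i] path_status[OF j] by simp
  also have "\<dots> \<longleftrightarrow> 2 * ((int i - int j) * (int i + int j + 1 - int n)) = 0"
    by (simp add: algebra_simps)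
  also have "\<dots> \<longleftrightarrow> i = j \<or> i + j + 1 = n" by auto
  finally show ?thesis .
qed

lemma path_k: "n \<ge> 1 \<Longrightarrow> k_num {0..<n} (path_edges n) = (n + 1) div 2"
proof -
  assume n: "n \<ge> 1"
  let ?s = "status {0..<n} (path_edges n)"
  have img: "?s ` {0..<n} = ?s ` {0..<(n + 1) div 2}"
  proof
    show "?s ` {0..<(n + 1) div 2} \<subseteq> ?s ` {0..<n}" by (intro image_mono) auto
    show "?s ` {0..<n} \<subseteq> ?s ` {0..<(n + 1) div 2}"
    proof
      fix z assume "z \<in> ?s ` {0..<n}"
      then obtain i where i: "i < n" "z = ?s i" by auto
      show "z \<in> ?s ` {0..<(n + 1) div 2}"
      proof (cases "i < (n + 1) div 2")
        case True then show ?thesis using i by auto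
      next
        case False
        have "?s (n - 1 - i) = ?s i" using path_status_eq[of "n - 1 - i" n i] i by simp
        moreover have "n - 1 - i < (n + 1) div 2" using False i by linarith
        ultimately show ?thesis using i by (metis atLeastLessThan_iff image_eqI zero_le)
      qed
    qed
  qed
  have inj: "inj_on ?s {0..<(n + 1) div 2}"
  proof (rule inj_onI)
    fix a b assume a: "a \<in> {0..<(n + 1) div 2}" and b: "b \<in> {0..<(n + 1) div 2}" and e: "?s a = ?s b"
    have "a < n" "b < n" using a b n by auto
    then have "a = b \<or> a + b + 1 = n" using path_status_eq e by blast
    then show "a = b" using a b by auto
  qed
  show ?thesis unfolding k_num_def img using card_image[OF inj] by simp
qed

lemma path_diam: "n \<ge> 1 \<Longrightarrow> diam {0..<n} (path_edges n) = n - 1"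
proof -
  assume n: "n \<ge> 1"
  let ?S = "{dist {0..<n} (path_edges n) u v | u v. u \<in> {0..<n} \<and> v \<in> {0..<n}}"
  have S: "?S = (\<lambda>(u, v). nat \<bar>int u - int v\<bar>) ` ({0..<n} \<times> {0..<n})"
  proof (rule set_eqI)
    fix z
    show "z \<in> ?S \<longleftrightarrow> z \<in> (\<lambda>(u, v). nat \<bar>int u - int v\<bar>) ` ({0..<n} \<times> {0..<n})"
    proof
      assume "z \<in> ?S"
      then obtain u v where "u < n" "v < n" "z = dist {0..<n} (path_edges n) u v" by auto
      then show "z \<in> (\<lambda>(u, v). nat \<bar>int u - int v\<bar>) ` ({0..<n} \<times> {0..<n})"
        using path_dist by (auto intro!: image_eqI[of _ _ "(u, v)"])
    next
      assume "z \<in> (\<lambda>(u, v). nat \<bar>int u - int v\<bar>) ` ({0..<n} \<times> {0..<n})"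
      then obtain u v where "u < n" "v < n" "z = nat \<bar>int u - int v\<bar>" by auto
      then show "z \<in> ?S" using path_dist[of u n v] by force
    qed
  qed
  show ?thesis unfolding diam_def
  proof (rule Max_eqI)
    show "finite ?S" unfolding S by simp
    show "y \<le> n - 1" if "y \<in> ?S" for y using that unfolding S by auto
    have "nat \<bar>int (n - 1) - int 0\<bar> = n - 1" by simp
    then show "n - 1 \<in> ?S" unfolding S using n
      by (intro image_eqI[of _ _ "(n - 1, 0)"]) auto
  qed
qed

lemma ceil_half: "\<lceil>(real n) / 2\<rceil> = int ((n + 1) div 2)"
proof -
  have "\<exists>m. n = 2 * m \<or> n = 2 * m + 1" by presburger
  then obtain m where "n = 2 * m \<or> n = 2 * m + 1" by blast
  then show ?thesis
  proof
    assume "n = 2 * m"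
    then show ?thesis by simp
  next
    assume h: "n = 2 * m + 1"
    then have "(n + 1) div 2 = m + 1" by simp
    moreover have "\<lceil>(real n) / 2\<rceil> = int m + 1" unfolding ceiling_eq_iff using h by simp
    ultimately show ?thesis by simp
  qed
qed

lemma path_part: "n \<ge> 1 \<Longrightarrow>
  int (k_num {0..<n} (path_edges n)) = \<lceil>(real (diam {0..<n} (path_edges n)) + 1) / 2\<rceil>"
proof -
  assume n: "n \<ge> 1"
  have "real (n - 1) + 1 = real n" using n by simp
  then show ?thesis using path_k[OF n] path_diam[OF n] ceil_half[of n] by simp
qed

lemma star_adj: "adj (star_edges n) i j \<longleftrightarrow> (i = 0 \<and> 0 < j \<and> j < n) \<or> (j = 0 \<and> 0 < i \<and> i < n)"
  unfolding adj_def star_edges_def by (auto simp: doubleton_eq_iff)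

definition sd :: "nat \<Rightarrow> nat \<Rightarrow> nat" where
  "sd i j = (if i = j then 0 else if i = 0 \<or> j = 0 then 1 else 2)"

lemma star_dist: "i < n \<Longrightarrow> j < n \<Longrightarrow> dist {0..<n} (star_edges n) i j = sd i j"
proof -
  assume i: "i < n" and j: "j < n"
  let ?V = "{0..<n}" and ?E = "star_edges n"
  show ?thesis
  proof (cases "i = j")
    case True
    then show ?thesis unfolding sd_def using reach_0[of i ?V ?E] i
      by (intro dist_eqI) auto
  next
    case ne: False
    show ?thesis
    proof (cases "i = 0 \<or> j = 0")
      case True
      have "adj ?E i j" using True ne i j by (auto simp: star_adj)
      then have r: "reach ?V ?E 1 i j" using reach_adj[of ?E i j ?V] i j by auto
      have "sd i j = 1" using ne True by (simp add: sd_def)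
      moreover have "dist ?V ?E i j = 1"
      proof (rule dist_eqI[OF r])
        fix m assume "reach ?V ?E m i j"
        then show "1 \<le> m" using reach_0_eq[of ?V ?E i j] ne by (cases m) auto
      qed
      ultimately show ?thesis by simp
    next
      case False
      have w: "is_walk ?V ?E [i, 0, j]" using False i j
        by (simp add: is_walk_Cons is_walk_single star_adj)
      have r: "reach ?V ?E 2 i j" unfolding reach_def
        by (rule exI[of _ "[i, 0, j]"]) (simp add: w)
      have "sd i j = 2" using ne False by (simp add: sd_def)
      moreover have "dist ?V ?E i j = 2"
      proof (rule dist_eqI[OF r])
        fix m assume m: "reach ?V ?E m i j"
        show "2 \<le> m"
        proof (rule ccontr)
          assume "\<not> 2 \<le> m"
          then have "m = 0 \<or> m = 1" by auto
          then show False
          proof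
            assume "m = 0" then show False using m reach_0_eq[of ?V ?E i j] ne by auto
          next
            assume "m = 1" then have "adj ?E i j" using m reach_1_adj[of ?V ?E i j] by auto
            then show False using False by (auto simp: star_adj)
          qed
        qed
      qed
      ultimately show ?thesis by simp
    qed
  qed
qed

lemma star_status0: "0 < n \<Longrightarrow> status {0..<n} (star_edges n) 0 = n - 1"
proof -
  assume n: "0 < n"
  have "status {0..<n} (star_edges n) 0 = (\<Sum>j\<in>{0..<n}. sd 0 j)"
    unfolding status_def using n by (intro sum.cong) (auto simp: star_dist)
  also have "\<dots> = sd 0 0 + (\<Sum>j\<in>{Suc 0..<n}. sd 0 j)" using n by (subst sum.atLeast_Suc_lessThan) auto
  also have "(\<Sum>j\<in>{Suc 0..<n}. sd 0 j) = (\<Sum>j\<in>{Suc 0..<n}. 1)" by (intro sum.cong) (auto simp: sd_def)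
  finally show ?thesis by (simp add: sd_def)
qed

lemma star_status_leaf: "0 < i \<Longrightarrow> i < n \<Longrightarrow> status {0..<n} (star_edges n) i = 2 * n - 3"
proof -
  assume i: "0 < i" and n: "i < n"
  have "status {0..<n} (star_edges n) i = (\<Sum>j\<in>{0..<n}. sd i j)"
    unfolding status_def using n by (intro sum.cong) (auto simp: star_dist)
  also have "\<dots> = sd i 0 + (\<Sum>j\<in>{Suc 0..<n}. sd i j)" using n by (subst sum.atLeast_Suc_lessThan) auto
  also have "(\<Sum>j\<in>{Suc 0..<n}. sd i j) = sd i i + (\<Sum>j\<in>{Suc 0..<n} - {i}. sd i j)"
    using i n by (intro sum.remove) auto
  also have "(\<Sum>j\<in>{Suc 0..<n} - {i}. sd i j) = (\<Sum>j\<in>{Suc 0..<n} - {i}. 2)"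
    using i by (intro sum.cong) (auto simp: sd_def)
  also have "\<dots> = 2 * (n - 2)" using i n by (simp add: card_Diff_singleton)
  finally show ?thesis using i n by (simp add: sd_def)
qed

lemma star_img: "0 < n \<Longrightarrow> status {0..<n} (star_edges n) ` {0..<n} =
   (if n = 1 then {0} else {n - 1, 2 * n - 3})"
proof -
  assume n: "0 < n"
  let ?s = "status {0..<n} (star_edges n)"
  have "{0..<n} = insert 0 {Suc 0..<n}" using n by auto
  then have "?s ` {0..<n} = insert (?s 0) (?s ` {Suc 0..<n})" by simp
  also have "?s ` {Suc 0..<n} = (\<lambda>_. 2 * n - 3) ` {Suc 0..<n}"
    by (intro image_cong) (auto simp: star_status_leaf)
  also have "\<dots> = (if n = 1 then {} else {2 * n - 3})" using n by (auto intro!: image_eqI[of _ _ "Suc 0"])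
  finally show ?thesis using n star_status0[OF n] by auto
qed

lemma star_k: "0 < n \<Longrightarrow> k_num {0..<n} (star_edges n) = (if n \<le> 2 then 1 else 2)"
proof -
  assume n: "0 < n"
  have "n = 1 \<or> n = 2 \<or> n \<ge> 3" using n by auto
  then show ?thesis
  proof (elim disjE)
    assume "n = 1" then show ?thesis unfolding k_num_def by (simp add: star_img)
  next
    assume h: "n = 2"
    then have "status {0..<n} (star_edges n) ` {0..<n} = {1}" using star_img[OF n] by simp
    then show ?thesis unfolding k_num_def using h by simp
  next
    assume h: "n \<ge> 3"
    then have "status {0..<n} (star_edges n) ` {0..<n} = {n - 1, 2 * n - 3}" using star_img[OF n] by simp
    moreover have "n - 1 \<noteq> 2 * n - 3" using h by simp
    ultimately show ?thesis unfolding k_num_def using h by simp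
  qed
qed

lemma star_diam: "0 < n \<Longrightarrow> diam {0..<n} (star_edges n) = (if n = 1 then 0 else if n = 2 then 1 else 2)"
proof -
  assume n: "0 < n"
  let ?S = "{dist {0..<n} (star_edges n) u v | u v. u \<in> {0..<n} \<and> v \<in> {0..<n}}"
  have S: "?S = {sd u v | u v. u \<in> {0..<n} \<and> v \<in> {0..<n}}"
  proof (rule set_eqI, rule iffI)
    fix z assume "z \<in> ?S"
    then obtain u v where "u < n" "v < n" "z = dist {0..<n} (star_edges n) u v" by auto
    then show "z \<in> {sd u v | u v. u \<in> {0..<n} \<and> v \<in> {0..<n}}" using star_dist[of u n v] by force
  next
    fix z assume "z \<in> {sd u v | u v. u \<in> {0..<n} \<and> v \<in> {0..<n}}"
    then obtain u v where "u < n" "v < n" "z = sd u v" by auto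
    then show "z \<in> ?S" using star_dist[of u n v] by force
  qed
  have S2: "?S \<subseteq> {0, 1, 2}" unfolding S sd_def by auto
  have fS: "finite ?S" using S2 finite_subset by blast
  have z: "0 \<in> ?S" unfolding S using n by (auto simp: sd_def)
  show ?thesis unfolding diam_def
  proof (cases "n = 1")
    case True
    then have "?S = {0}" using S2 z unfolding S sd_def by auto
    then show "Max ?S = (if n = 1 then 0 else if n = 2 then 1 else 2)" using True by simp
  next
    case n1: False
    have "sd 0 1 = 1" by (simp add: sd_def)
    moreover have "0 \<in> {0..<n}" "1 \<in> {0..<n}" using n n1 by auto
    ultimately have o: "1 \<in> ?S" unfolding S mem_Collect_eq by metis
    show "Max ?S = (if n = 1 then 0 else if n = 2 then 1 else 2)"
    proof (cases "n = 2")
      case True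
      then have sub: "?S \<subseteq> {0, 1}" unfolding S sd_def by auto
      have "Max ?S = 1"
      proof (rule Max_eqI[OF fS])
        show "y \<le> 1" if "y \<in> ?S" for y using subsetD[OF sub that] by auto
        show "1 \<in> ?S" by (rule o)
      qed
      then show ?thesis using True by simp
    next
      case False
      have "sd 1 2 = 2" by (simp add: sd_def)
      moreover have "1 \<in> {0..<n}" "2 \<in> {0..<n}" using n n1 False by auto
      ultimately have t: "2 \<in> ?S" unfolding S mem_Collect_eq by metis
      have "Max ?S = 2"
      proof (rule Max_eqI[OF fS])
        show "y \<le> 2" if "y \<in> ?S" for y using subsetD[OF S2 that] by auto
        show "2 \<in> ?S" by (rule t)
      qed
      then show ?thesis using False n1 by simp
    qed
  qed
qed

lemma star_part: "n \<ge> 1 \<Longrightarrow>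
  int (k_num {0..<n} (star_edges n)) = \<lceil>(real (diam {0..<n} (star_edges n)) + 1) / 2\<rceil>"
proof -
  assume n: "n \<ge> 1"
  have c1: "\<lceil>(real 0 + 1) / 2\<rceil> = 1" by (simp add: ceiling_eq_iff)
  have c2: "\<lceil>(real 1 + 1) / 2\<rceil> = 1" by simp
  have c3: "\<lceil>(real 2 + 1) / 2\<rceil> = 2" by (simp add: ceiling_eq_iff)
  have "n = 1 \<or> n = 2 \<or> n \<ge> 3" using n by auto
  then show ?thesis
  proof (elim disjE)
    assume h: "n = 1"
    then show ?thesis using star_k[of n] star_diam[of n] c1 by simp
  next
    assume h: "n = 2"
    then show ?thesis using star_k[of n] star_diam[of n] c2 by simp
  next
    assume h: "n \<ge> 3"
    then have "k_num {0..<n} (star_edges n) = 2" "diam {0..<n} (star_edges n) = 2"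
      using star_k[of n] star_diam[of n] by auto
    then show ?thesis using c3 by simp
  qed
qed

theorem lemma3p2:
  shows "(\<forall>(V :: 'a set) E. is_tree V E \<longrightarrow>
            int (k_num V E) \<ge> \<lceil>(real (diam V E) + 1) / 2\<rceil>)
       \<and> (\<forall>n::nat. n \<ge> 1 \<longrightarrow>
            int (k_num {0..<n} (path_edges n)) = \<lceil>(real (diam {0..<n} (path_edges n)) + 1) / 2\<rceil>
          \<and> int (k_num {0..<n} (star_edges n)) = \<lceil>(real (diam {0..<n} (star_edges n)) + 1) / 2\<rceil>)"
proof (intro conjI allI impI)
  fix V :: "'a set" and E :: "'a set set"
  assume "is_tree V E"
  then have "tree_ctx V E" by (rule tree_ctx.intro)
  then show "int (k_num V E) \<ge> \<lceil>(real (diam V E) + 1) / 2\<rceil>" by (rule tree_ctx.main_bound)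
next
  fix n :: nat assume "n \<ge> 1"
  then show "int (k_num {0..<n} (path_edges n)) = \<lceil>(real (diam {0..<n} (path_edges n)) + 1) / 2\<rceil>"
    by (rule path_part)
next
  fix n :: nat assume "n \<ge> 1"
  then show "int (k_num {0..<n} (star_edges n)) = \<lceil>(real (diam {0..<n} (star_edges n)) + 1) / 2\<rceil>"
    by (rule star_part)
qed

end
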